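(* Let $\Theta$ be a parameter set, let $B(p,\theta)$ and $L(p,\theta)$ be real-valued functions of a distribution $p$ and a parameter $\theta\in\Theta$, and for each $p$ let $\theta^*(p)\in\arg\min_{\theta\in\Theta}B(p,\theta)$. For $\rho_1,\rho_2\ge 0$ and $\eta\in[0,1)$ define $$\mathcal{G}_{\downarrow}(\rho_1,\eta)=\Big\{p:\ \sup_{r\le \frac{p}{1-\eta}} B(r,\theta^*(p))\le\rho_1\Big\},$$ $$\mathcal{G}_{\uparrow}(\rho_1,\rho_2,\eta)=\Big\{p:\ \text{for all }\theta\in\Theta \text{ and all } r\le\tfrac{p}{1-\eta},\ \big(B(r,\theta)\le\rho_1\Rightarrow L(p,\theta)\le\rho_2\big)\Big\},$$ and $\mathcal{G}^{\mathsf{TV}}(\rho_1,\rho_2,\eta)=\mathcal{G}_{\downarrow}(\rho_1,\eta)\cap\mathcal{G}_{\uparrow}(\rho_1,\rho_2,\eta)$. If $2\epsilon\le\eta<1$, then $$\sup_{p_1,p_2\in\mathcal{G}^{\mathsf{TV}}(\rho_1,\rho_2,\eta):\ \mathsf{TV}(p_1,p_2)\le 2\epsilon} L(p_1,\theta^*(p_2))\le\rho_2 .$$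
   Context: For distributions $r,p$ and $\eta\in[0,1)$, $r\le \frac{p}{1-\eta}$ means $r$ is a probability distribution with $r(A)\le p(A)/(1-\eta)$ for all measurable $A$. $\mathsf{TV}(p,q)=\sup_A|p(A)-q(A)|$. The left-hand side of the conclusion is called the modulus of continuity of $\mathcal{G}^{\mathsf{TV}}(\rho_1,\rho_2,\eta)$ at level $2\epsilon$ under $\mathsf{TV}$ and loss $L$. *)

theory Defs
  imports "HOL-Probability.Probability"
begin

definition dists :: "'a measure \<Rightarrow> 'a measure set" where
  "dists M = {p. prob_space p \<and> sets p = sets M}"

text \<open>r \<le> p/(1-eta): r is a distribution with r(A) \<le> p(A)/(1-eta) for all measurable A.\<close>
definition dom_by :: "'a measure \<Rightarrow> 'a measure \<Rightarrow> 'a measure \<Rightarrow> real \<Rightarrow> bool" where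
  "dom_by M r p \<eta> \<longleftrightarrow> r \<in> dists M \<and>
     (\<forall>A\<in>sets M. measure r A \<le> measure p A / (1 - \<eta>))"

definition TV :: "'a measure \<Rightarrow> 'a measure \<Rightarrow> 'a measure \<Rightarrow> real" where
  "TV M p q = (SUP A\<in>sets M. \<bar>measure p A - measure q A\<bar>)"

definition G_down :: "'a measure \<Rightarrow> ('a measure \<Rightarrow> 'b \<Rightarrow> real) \<Rightarrow> ('a measure \<Rightarrow> 'b)
    \<Rightarrow> real \<Rightarrow> real \<Rightarrow> 'a measure set" where
  "G_down M B \<theta>s \<rho>1 \<eta> =
     {p \<in> dists M. (SUP r\<in>{r. dom_by M r p \<eta>}. ereal (B r (\<theta>s p))) \<le> ereal \<rho>1}"

definition G_up :: "'a measure \<Rightarrow> 'b set \<Rightarrow> ('a measure \<Rightarrow> 'b \<Rightarrow> real) \<Rightarrow> ('a measure \<Rightarrow> 'b \<Rightarrow> real)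
    \<Rightarrow> real \<Rightarrow> real \<Rightarrow> real \<Rightarrow> 'a measure set" where
  "G_up M \<Theta> B L \<rho>1 \<rho>2 \<eta> =
     {p \<in> dists M. \<forall>\<theta>\<in>\<Theta>. \<forall>r. dom_by M r p \<eta> \<longrightarrow> B r \<theta> \<le> \<rho>1 \<longrightarrow> L p \<theta> \<le> \<rho>2}"

definition G_TV :: "'a measure \<Rightarrow> 'b set \<Rightarrow> ('a measure \<Rightarrow> 'b \<Rightarrow> real) \<Rightarrow> ('a measure \<Rightarrow> 'b \<Rightarrow> real)
    \<Rightarrow> ('a measure \<Rightarrow> 'b) \<Rightarrow> real \<Rightarrow> real \<Rightarrow> real \<Rightarrow> 'a measure set" where
  "G_TV M \<Theta> B L \<theta>s \<rho>1 \<rho>2 \<eta> = G_down M B \<theta>s \<rho>1 \<eta> \<inter> G_up M \<Theta> B L \<rho>1 \<rho>2 \<eta>"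

end

theory Submission
  imports Defs
begin

definition addm :: "'a measure \<Rightarrow> 'a measure \<Rightarrow> 'a measure" where
  "addm p q = measure_of (space p) (sets p) (\<lambda>A. emeasure p A + emeasure q A)"

lemma addm_sets[simp]: "sets (addm p q) = sets p"
  unfolding addm_def by (simp add: sets.sigma_sets_eq)

lemma addm_space[simp]: "space (addm p q) = space p"
  unfolding addm_def by (simp add: space_measure_of_conv)

lemma addm_emeasure:
  assumes "sets q = sets p" "A \<in> sets p"
  shows "emeasure (addm p q) A = emeasure p A + emeasure q A"
  unfolding addm_def
proof (rule emeasure_measure_of_sigma[OF sets.sigma_algebra_axioms _ _ assms(2)])
  show "positive (sets p) (\<lambda>A. emeasure p A + emeasure q A)"
    unfolding positive_def using assms by (simp add: emeasure_empty)
  show "countably_additive (sets p) (\<lambda>A. emeasure p A + emeasure q A)"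
    unfolding countably_additive_def
  proof (intro allI impI)
    fix F :: "nat \<Rightarrow> _" assume F: "range F \<subseteq> sets p" "disjoint_family F" "\<Union> (range F) \<in> sets p"
    have 1: "(\<Sum>i. emeasure p (F i)) = emeasure p (\<Union> (range F))"
      using F by (simp add: suminf_emeasure)
    have 2: "(\<Sum>i. emeasure q (F i)) = emeasure q (\<Union> (range F))"
      using F assms by (intro suminf_emeasure) auto
    show "(\<Sum>i. emeasure p (F i) + emeasure q (F i)) = emeasure p (\<Union> (range F)) + emeasure q (\<Union> (range F))"
      using 1 2 suminf_add[OF summableI summableI, of "\<lambda>i. emeasure p (F i)" "\<lambda>i. emeasure q (F i)"] by simp
  qed
qed

lemma min_measure:
  assumes p1: "p1 \<in> dists M" and p2: "p2 \<in> dists M" and tv: "TV M p1 p2 < 1"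
  shows "\<exists>r\<in>dists M. \<forall>X\<in>sets M. measure r X \<le> measure p1 X / (1 - TV M p1 p2)
            \<and> measure r X \<le> measure p2 X / (1 - TV M p1 p2)"
proof -
  interpret P1: prob_space p1 using p1 by (simp add: dists_def)
  interpret P2: prob_space p2 using p2 by (simp add: dists_def)
  have s1: "sets p1 = sets M" and s2: "sets p2 = sets M" using p1 p2 by (auto simp: dists_def)
  have sp1: "space p1 = space M" and sp2: "space p2 = space M"
    using s1 s2 sets_eq_imp_space_eq by blast+
  define q where "q = addm p1 p2"
  have sq: "sets q = sets M" and spq: "space q = space M" using s1 sp1 by (auto simp: q_def)
  have eq: "\<And>A. A \<in> sets M \<Longrightarrow> emeasure q A = emeasure p1 A + emeasure p2 A"
    unfolding q_def using s1 s2 by (intro addm_emeasure) auto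
  interpret Q: finite_measure q
  proof
    show "emeasure q (space q) \<noteq> \<infinity>" using eq[of "space M"] spq sp1 sp2 P1.emeasure_space_1 P2.emeasure_space_1
      by simp
  qed
  have ac1: "absolutely_continuous q p1" and ac2: "absolutely_continuous q p2"
    unfolding absolutely_continuous_def
    using eq by (auto simp: null_sets_def sq s1 s2)
  define f1 where "f1 = RN_deriv q p1"
  define f2 where "f2 = RN_deriv q p2"
  have d1: "density q f1 = p1" unfolding f1_def using Q.density_RN_deriv[OF ac1] s1 sq by simp
  have d2: "density q f2 = p2" unfolding f2_def using Q.density_RN_deriv[OF ac2] s2 sq by simp
  have mf1[measurable]: "f1 \<in> borel_measurable q" and mf2[measurable]: "f2 \<in> borel_measurable q"
    unfolding f1_def f2_def by auto
  define g where "g = (\<lambda>x. min (f1 x) (f2 x))"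
  have mg[measurable]: "g \<in> borel_measurable q" unfolding g_def by measurable
  define r0 where "r0 = density q g"
  have sr0: "sets r0 = sets M" and spr0: "space r0 = space M" using sq spq by (auto simp: r0_def)
  have le1: "emeasure r0 X \<le> emeasure p1 X" if "X \<in> sets M" for X
  proof -
    have "emeasure r0 X = (\<integral>\<^sup>+x. g x * indicator X x \<partial>q)"
      unfolding r0_def using that sq by (simp add: emeasure_density)
    also have "\<dots> \<le> (\<integral>\<^sup>+x. f1 x * indicator X x \<partial>q)"
      by (intro nn_integral_mono) (auto simp: g_def mult_right_mono)
    also have "\<dots> = emeasure p1 X"
      using d1 that sq by (metis emeasure_density mf1)
    finally show ?thesis .
  qed
  have le2: "emeasure r0 X \<le> emeasure p2 X" if "X \<in> sets M" for X
  proof -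
    have "emeasure r0 X = (\<integral>\<^sup>+x. g x * indicator X x \<partial>q)"
      unfolding r0_def using that sq by (simp add: emeasure_density)
    also have "\<dots> \<le> (\<integral>\<^sup>+x. f2 x * indicator X x \<partial>q)"
      by (intro nn_integral_mono) (auto simp: g_def mult_right_mono)
    also have "\<dots> = emeasure p2 X"
      using d2 that sq by (metis emeasure_density mf2)
    finally show ?thesis .
  qed
  define A where "A = {x\<in>space q. f2 x < f1 x}"
  have A: "A \<in> sets M" unfolding A_def using sq[symmetric] by measurable
  have tot: "emeasure r0 (space M) = emeasure p2 A + emeasure p1 (space M - A)"
  proof -
    have "emeasure r0 (space M) = (\<integral>\<^sup>+x. g x \<partial>q)"
      unfolding r0_def using spq sq
      by (subst emeasure_density) (auto intro!: nn_integral_cong simp: indicator_def)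
    also have "\<dots> = (\<integral>\<^sup>+x. f2 x * indicator A x + f1 x * indicator (space M - A) x \<partial>q)"
      by (intro nn_integral_cong) (auto simp: g_def A_def spq indicator_def min_def)
    also have "\<dots> = (\<integral>\<^sup>+x. f2 x * indicator A x \<partial>q) + (\<integral>\<^sup>+x. f1 x * indicator (space M - A) x \<partial>q)"
      using A sq by (intro nn_integral_add) auto
    also have "\<dots> = emeasure p2 A + emeasure p1 (space M - A)"
      using A sq d1 d2 by (metis emeasure_density mf1 mf2 sets.compl_sets spq)
    finally show ?thesis .
  qed
  have bdd: "bdd_above ((\<lambda>A. \<bar>measure p1 A - measure p2 A\<bar>) ` sets M)"
  proof (rule bdd_aboveI2)
    fix X show "\<bar>measure p1 X - measure p2 X\<bar> \<le> 1"
      using P1.prob_le_1[of X] P2.prob_le_1[of X] measure_nonneg[of p1 X] measure_nonneg[of p2 X]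
      unfolding abs_le_iff by linarith
  qed
  have tvA: "measure p1 A - measure p2 A \<le> TV M p1 p2"
    unfolding TV_def using cSUP_upper[OF A bdd] by linarith
  define c where "c = measure r0 (space M)"
  have cval: "c = measure p2 A + (1 - measure p1 A)"
  proof -
    have "c = enn2real (emeasure p2 A + emeasure p1 (space M - A))" unfolding c_def measure_def tot ..
    also have "\<dots> = measure p2 A + measure p1 (space M - A)"
      unfolding measure_def
      by (rule enn2real_plus) (auto simp: less_top[symmetric] P1.emeasure_finite P2.emeasure_finite)
    also have "measure p1 (space M - A) = 1 - measure p1 A"
      using P1.prob_compl[of A] A s1 sp1 by simp
    finally show ?thesis .
  qed
  have cge: "c \<ge> 1 - TV M p1 p2" using cval tvA by linarith
  have cpos: "c > 0" using cge tv by linarith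
  have r0fin: "emeasure r0 X < \<infinity>" if "X \<in> sets M" for X
    by (rule le_less_trans[OF le1[OF that]]) (simp add: less_top[symmetric])
  define r where "r = scale_measure (ennreal (1/c)) r0"
  have sr: "sets r = sets M" and spr: "space r = space M"
    using sr0 spr0 by (auto simp: r_def space_scale_measure)
  have mr: "measure r X = measure r0 X / c" for X
    unfolding r_def measure_def using cpos by (simp add: enn2real_mult)
  have "prob_space r"
  proof
    have "emeasure r (space r) = ennreal (1/c) * emeasure r0 (space M)" using spr by (simp add: r_def)
    also have "emeasure r0 (space M) = ennreal c"
      unfolding c_def using r0fin[of "space M"] by (simp add: emeasure_eq_ennreal_measure)
    finally show "emeasure r (space r) = 1" using cpos by (simp add: ennreal_mult[symmetric])
  qed
  then have rd: "r \<in> dists M" using sr by (simp add: dists_def)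
  show ?thesis
  proof (intro bexI[OF _ rd] ballI conjI)
    fix X assume X: "X \<in> sets M"
    have a1: "measure r0 X \<le> measure p1 X"
      unfolding measure_def using le1[OF X] P1.emeasure_finite by (intro enn2real_mono) (auto simp: less_top[symmetric])
    have a2: "measure r0 X \<le> measure p2 X"
      unfolding measure_def using le2[OF X] P2.emeasure_finite by (intro enn2real_mono) (auto simp: less_top[symmetric])
    have tvp: "0 < 1 - TV M p1 p2" using tv by simp
    show "measure r X \<le> measure p1 X / (1 - TV M p1 p2)"
      unfolding mr using a1 cge tvp cpos
      by (meson divide_right_mono frac_le measure_nonneg order.trans)
    show "measure r X \<le> measure p2 X / (1 - TV M p1 p2)"
      unfolding mr using a2 cge tvp cpos
      by (meson divide_right_mono frac_le measure_nonneg order.trans)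
  qed
qed

theorem theorem3p3:
  fixes M :: "'a measure" and \<Theta> :: "'b set"
    and B L :: "'a measure \<Rightarrow> 'b \<Rightarrow> real" and \<theta>s :: "'a measure \<Rightarrow> 'b"
    and \<rho>1 \<rho>2 \<eta> \<epsilon> :: real
  assumes argmin: "\<And>p. p \<in> dists M \<Longrightarrow> \<theta>s p \<in> \<Theta> \<and> (\<forall>\<theta>\<in>\<Theta>. B p (\<theta>s p) \<le> B p \<theta>)"
    and "\<rho>1 \<ge> 0" and "\<rho>2 \<ge> 0" and "0 \<le> \<eta>"
    and "2 * \<epsilon> \<le> \<eta>" and "\<eta> < 1"
  shows "(SUP pp\<in>{(p1, p2). p1 \<in> G_TV M \<Theta> B L \<theta>s \<rho>1 \<rho>2 \<eta> \<and> p2 \<in> G_TV M \<Theta> B L \<theta>s \<rho>1 \<rho>2 \<eta>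
              \<and> TV M p1 p2 \<le> 2 * \<epsilon>}. ereal (L (fst pp) (\<theta>s (snd pp)))) \<le> ereal \<rho>2"
proof (rule SUP_least, clarify)
  fix p1 p2 assume g1: "p1 \<in> G_TV M \<Theta> B L \<theta>s \<rho>1 \<rho>2 \<eta>" and g2: "p2 \<in> G_TV M \<Theta> B L \<theta>s \<rho>1 \<rho>2 \<eta>"
    and tv: "TV M p1 p2 \<le> 2 * \<epsilon>"
  have d1: "p1 \<in> dists M" and d2: "p2 \<in> dists M" using g1 g2 by (auto simp: G_TV_def G_up_def)
  have tv1: "TV M p1 p2 < 1" using tv assms by linarith
  obtain r where rd: "r \<in> dists M" and rX: "\<forall>X\<in>sets M. measure r X \<le> measure p1 X / (1 - TV M p1 p2)
            \<and> measure r X \<le> measure p2 X / (1 - TV M p1 p2)"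
    using min_measure[OF d1 d2 tv1] by blast
  have le: "a / (1 - TV M p1 p2) \<le> a / (1 - \<eta>)" if "a \<ge> 0" for a
    using that tv assms tv1 by (intro divide_left_mono) auto
  have dom1: "dom_by M r p1 \<eta>" unfolding dom_by_def
    using rd rX le measure_nonneg by (meson order.trans)
  have dom2: "dom_by M r p2 \<eta>" unfolding dom_by_def
    using rd rX le measure_nonneg by (meson order.trans)
  have "ereal (B r (\<theta>s p2)) \<le> (SUP r\<in>{r. dom_by M r p2 \<eta>}. ereal (B r (\<theta>s p2)))"
    using dom2 by (intro SUP_upper) auto
  also have "\<dots> \<le> ereal \<rho>1" using g2 by (simp add: G_TV_def G_down_def)
  finally have "B r (\<theta>s p2) \<le> \<rho>1" by simp
  moreover have "\<theta>s p2 \<in> \<Theta>" using argmin d2 by blast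
  ultimately have "L p1 (\<theta>s p2) \<le> \<rho>2" using g1 dom1 by (auto simp: G_TV_def G_up_def)
  then show "ereal (L (fst (p1, p2)) (\<theta>s (snd (p1, p2)))) \<le> ereal \<rho>2" by simp
qed

end
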